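(* Let $\mathcal P$ be a finite-dimensional Poisson $n$-Lie algebra over an algebraically closed field of characteristic zero. Then $\mathcal P$ is solvable if and only if the $n$-Lie algebra $\mathcal P_L=(\mathcal P,[-,\dots,-])$ is solvable and the associative algebra $\mathcal P_A=(\mathcal P,\cdot)$ is nilpotent.
   Context: A Poisson $n$-Lie algebra is a commutative associative algebra $(\mathcal P,\cdot)$ with an $n$-linear skew-symmetric bracket satisfying the fundamental identity $[x_1,\dots,x_{n-1},[y_1,\dots,y_n]]=\sum_{i=1}^n[y_1,\dots,[x_1,\dots,x_{n-1},y_i],\dots,y_n]$ and the Leibniz rule $[y\cdot z,x_2,\dots,x_n]=y\cdot[z,x_2,\dots,x_n]+z\cdot[y,x_2,\dots,x_n]$. Products/brackets of subspaces are linear spans. $\mathcal P$ is solvable if $\mathcal P^{(s)}=0$ for some $s$, where $\mathcal P^{(1)}=\mathcal P$, $\mathcal P^{(k+1)}=[\mathcal P^{(k)},\mathcal P^{(k)},\mathcal P,\dots,\mathcal P]+\mathcal P^{(k)}\cdot\mathcal P^{(k)}$. $\mathcal P_L$ is solvable if $L^{(s)}=0$ for some $s$, where $L^{(1)}=\mathcal P$, $L^{(k+1)}=[L^{(k)},L^{(k)},\mathcal P,\dots,\mathcal P]$. $\mathcal P_A$ is nilpotent if all products of some fixed number of elements vanish. *)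

theory Defs
  imports Main "HOL-Computational_Algebra.Polynomial"
begin

definition alg_closed :: "'k::field itself \<Rightarrow> bool" where
  "alg_closed _ \<longleftrightarrow> (\<forall>p::'k poly. degree p > 0 \<longrightarrow> (\<exists>x. poly p x = 0))"

definition poisson_nLie ::
  "('k::field \<Rightarrow> 'v::ab_group_add \<Rightarrow> 'v) \<Rightarrow> ('v \<Rightarrow> 'v \<Rightarrow> 'v) \<Rightarrow> ('v list \<Rightarrow> 'v) \<Rightarrow> nat \<Rightarrow> bool"
where
  "poisson_nLie scale mul br n \<longleftrightarrow>
     vector_space scale \<and>
     \<comment> \<open>commutative associative algebra (bilinear product)\<close>
     (\<forall>x. Vector_Spaces.linear scale scale (mul x)) \<and>
     (\<forall>x y. mul x y = mul y x) \<and>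
     (\<forall>x y z. mul (mul x y) z = mul x (mul y z)) \<and>
     \<comment> \<open>n-linear bracket\<close>
     (\<forall>xs i. length xs = n \<longrightarrow> i < n \<longrightarrow>
        Vector_Spaces.linear scale scale (\<lambda>x. br (xs[i := x]))) \<and>
     \<comment> \<open>skew-symmetry\<close>
     (\<forall>xs i j. length xs = n \<longrightarrow> i < n \<longrightarrow> j < n \<longrightarrow> i \<noteq> j \<longrightarrow>
        br (xs[i := xs ! j, j := xs ! i]) = - br xs) \<and>
     \<comment> \<open>fundamental identity\<close>
     (\<forall>xs ys. length xs = n - 1 \<longrightarrow> length ys = n \<longrightarrow>
        br (xs @ [br ys]) = (\<Sum>i<n. br (ys[i := br (xs @ [ys ! i])]))) \<and>
     \<comment> \<open>Leibniz rule\<close>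
     (\<forall>y z xs. length xs = n - 1 \<longrightarrow>
        br (mul y z # xs) = mul y (br (z # xs)) + mul z (br (y # xs)))"

text \<open>Derived series of the Poisson n-Lie algebra; index 0 corresponds to the paper's index 1.\<close>
fun poisson_derived ::
  "('k::field \<Rightarrow> 'v::ab_group_add \<Rightarrow> 'v) \<Rightarrow> ('v \<Rightarrow> 'v \<Rightarrow> 'v) \<Rightarrow> ('v list \<Rightarrow> 'v) \<Rightarrow> nat \<Rightarrow> nat \<Rightarrow> 'v set"
where
  "poisson_derived scale mul br n 0 = UNIV"
| "poisson_derived scale mul br n (Suc k) =
     module.span scale
       ({br (a # b # cs) | a b cs. a \<in> poisson_derived scale mul br n k \<and>
            b \<in> poisson_derived scale mul br n k \<and> length cs = n - 2}
        \<union> {mul a b | a b. a \<in> poisson_derived scale mul br n k \<and>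
            b \<in> poisson_derived scale mul br n k})"

fun lie_derived ::
  "('k::field \<Rightarrow> 'v::ab_group_add \<Rightarrow> 'v) \<Rightarrow> ('v list \<Rightarrow> 'v) \<Rightarrow> nat \<Rightarrow> nat \<Rightarrow> 'v set"
where
  "lie_derived scale br n 0 = UNIV"
| "lie_derived scale br n (Suc k) =
     module.span scale
       {br (a # b # cs) | a b cs. a \<in> lie_derived scale br n k \<and>
            b \<in> lie_derived scale br n k \<and> length cs = n - 2}"

definition poisson_solvable where
  "poisson_solvable scale mul br n \<longleftrightarrow> (\<exists>s. poisson_derived scale mul br n s = {0})"

definition lie_solvable where
  "lie_solvable scale br n \<longleftrightarrow> (\<exists>s. lie_derived scale br n s = {0})"

definition assoc_nilpotent :: "('v::zero \<Rightarrow> 'v \<Rightarrow> 'v) \<Rightarrow> bool" where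
  "assoc_nilpotent mul \<longleftrightarrow>
     (\<exists>m\<ge>1. \<forall>xs. length xs = m \<longrightarrow> foldl mul (hd xs) (tl xs) = 0)"

end

theory Submission
  imports Defs
begin

definition lprod :: "('v \<Rightarrow> 'v \<Rightarrow> 'v) \<Rightarrow> 'v list \<Rightarrow> 'v" where
  "lprod mul xs = foldl mul (hd xs) (tl xs)"

lemma lprod_snoc: "xs \<noteq> [] \<Longrightarrow> lprod mul (xs @ [y]) = mul (lprod mul xs) y"
  by (cases xs) (auto simp: lprod_def)

lemma lprod_append:
  assumes assoc: "\<And>x y z. mul (mul x y) z = mul x (mul y z)"
  shows "xs \<noteq> [] \<Longrightarrow> ys \<noteq> [] \<Longrightarrow> lprod mul (xs @ ys) = mul (lprod mul xs) (lprod mul ys)"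
proof (induction ys rule: rev_induct)
  case Nil then show ?case by simp
next
  case (snoc y ys)
  show ?case
  proof (cases "ys = []")
    case True then show ?thesis using snoc by (simp add: lprod_snoc lprod_def)
  next
    case False
    have "lprod mul (xs @ ys @ [y]) = mul (lprod mul (xs @ ys)) y"
      using lprod_snoc[of "xs @ ys" mul y] snoc by simp
    also have "\<dots> = mul (lprod mul xs) (mul (lprod mul ys) y)"
      using snoc False by (simp add: assoc)
    also have "\<dots> = mul (lprod mul xs) (lprod mul (ys @ [y]))"
      using lprod_snoc[OF False] by simp
    finally show ?thesis by simp
  qed
qed

locale pn = vector_space scale for scale :: "'k::field \<Rightarrow> 'v::ab_group_add \<Rightarrow> 'v" +
  fixes mul :: "'v \<Rightarrow> 'v \<Rightarrow> 'v" and br :: "'v list \<Rightarrow> 'v" and n :: nat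
  assumes P: "poisson_nLie scale mul br n" and n2: "n \<ge> 2"
begin

lemma lin_span:
  assumes "Vector_Spaces.linear scale scale f" "subspace T" "\<And>x. x \<in> B \<Longrightarrow> f x \<in> T"
    "x \<in> span B"
  shows "f x \<in> T"
proof -
  have h: "module_hom scale scale f" using assms(1) linear_iff_module_hom by blast
  have "subspace (f -` T)" using module_hom.subspace_vimage[OF h] assms(2) by simp
  then have "span B \<subseteq> f -` T" using span_minimal[of B "f -` T"] assms(3) by blast
  then show ?thesis using assms(4) by blast
qed

lemma mul_lin: "Vector_Spaces.linear scale scale (mul x)"
  using P unfolding poisson_nLie_def by blast
lemma comm: "mul x y = mul y x"
  using P unfolding poisson_nLie_def by blast
lemma assoc: "mul (mul x y) z = mul x (mul y z)"
  using P unfolding poisson_nLie_def by blast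
lemma br_lin: "length xs = n \<Longrightarrow> i < n \<Longrightarrow> Vector_Spaces.linear scale scale (\<lambda>x. br (xs[i := x]))"
  using P unfolding poisson_nLie_def by blast
lemma skew: "length xs = n \<Longrightarrow> i < n \<Longrightarrow> j < n \<Longrightarrow> i \<noteq> j \<Longrightarrow>
        br (xs[i := xs ! j, j := xs ! i]) = - br xs"
  using P unfolding poisson_nLie_def by blast
lemma leib: "length xs = n - 1 \<Longrightarrow>
        br (mul y z # xs) = mul y (br (z # xs)) + mul z (br (y # xs))"
  using P unfolding poisson_nLie_def by blast

lemma lin_add: "Vector_Spaces.linear scale scale f \<Longrightarrow> f (a + b) = f a + f b"
  using linear_iff_module_hom module_hom.add by metis

lemma br_lin0: "length cs = n - 1 \<Longrightarrow> Vector_Spaces.linear scale scale (\<lambda>x. br (x # cs))"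
  using br_lin[of "0 # cs" 0] n2 by simp

lemma br_lin1: "length cs = n - 2 \<Longrightarrow> Vector_Spaces.linear scale scale (\<lambda>x. br (c # x # cs))"
  using br_lin[of "c # 0 # cs" 1] n2 by simp

lemma skew01: "length cs = n - 2 \<Longrightarrow> br (b # a # cs) = - br (a # b # cs)"
  using skew[of "a # b # cs" 0 1] n2 by simp

fun apow :: "nat \<Rightarrow> 'v set" where
  "apow 0 = UNIV"
| "apow (Suc k) = span {mul a b | a b. b \<in> apow k}"

lemma apow_sub: "subspace (apow k)"
  by (cases k) auto

lemma apow_gen: "b \<in> apow k \<Longrightarrow> mul a b \<in> apow (Suc k)"
  by (auto intro: span_base)

lemma apow_gen': "b \<in> apow k \<Longrightarrow> mul b a \<in> apow (Suc k)"
  using apow_gen comm by metis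

lemma apow_dec: "apow (Suc k) \<subseteq> apow k"
proof (induction k)
  case 0 then show ?case by simp
next
  case (Suc k)
  have "{mul a b | a b. b \<in> apow (Suc k)} \<subseteq> {mul a b | a b. b \<in> apow k}" using Suc by blast
  then show ?case by (simp only: apow.simps) (rule span_mono)
qed

lemma apow_anti: "i \<le> j \<Longrightarrow> apow j \<subseteq> apow i"
proof (induction j)
  case 0 then show ?case by simp
next
  case (Suc j)
  then show ?case using apow_dec[of j] by (cases "i = Suc j") auto
qed

lemma apow_Q: "apow m \<subseteq> span {lprod mul xs | xs. length xs = Suc m}"
proof (induction m)
  case 0
  show ?case
  proof
    fix x :: 'v
    have "x = lprod mul [x]" by (simp add: lprod_def)
    then show "x \<in> span {lprod mul xs | xs. length xs = Suc 0}"
      by (intro span_base) force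
  qed
next
  case (Suc m)
  let ?Q = "{lprod mul xs | xs. length xs = Suc (Suc m)}"
  have "{mul a b | a b. b \<in> apow m} \<subseteq> span ?Q"
  proof clarify
    fix a b assume b: "b \<in> apow m"
    show "mul a b \<in> span ?Q"
    proof (rule lin_span[OF mul_lin subspace_span _ ])
      show "b \<in> span {lprod mul xs | xs. length xs = Suc m}" using Suc b by blast
    next
      fix q assume "q \<in> {lprod mul xs | xs. length xs = Suc m}"
      then obtain xs where xs: "length xs = Suc m" "q = lprod mul xs" by blast
      then have "xs \<noteq> []" by auto
      then have "mul a q = lprod mul (xs @ [a])"
        using lprod_snoc[of xs mul a] comm[of a q] xs by simp
      then show "mul a q \<in> span ?Q" using xs by (intro span_base) force
    qed
  qed
  then show ?case by (simp only: apow.simps) (rule span_minimal, simp_all)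
qed

lemma F1: "length xs = n - 1 \<Longrightarrow> a \<in> apow k \<Longrightarrow> br (a # xs) \<in> apow k"
proof (induction k arbitrary: a xs)
  case 0 then show ?case by simp
next
  case (Suc k)
  show ?case
  proof (rule lin_span[OF br_lin0[OF Suc.prems(1)] apow_sub])
    show "a \<in> span {mul a b | a b. b \<in> apow k}" using Suc.prems by simp
  next
    fix x assume "x \<in> {mul a b | a b. b \<in> apow k}"
    then obtain y z where x: "x = mul y z" "z \<in> apow k" by blast
    have "br (x # xs) = mul y (br (z # xs)) + mul z (br (y # xs))"
      using leib Suc.prems x by simp
    moreover have "mul y (br (z # xs)) \<in> apow (Suc k)"
      using Suc.IH[OF Suc.prems(1) x(2)] apow_gen by blast
    moreover have "mul z (br (y # xs)) \<in> apow (Suc k)"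
      using apow_gen' x(2) by blast
    ultimately show "br (x # xs) \<in> apow (Suc k)"
      using apow_sub subspace_add by metis
  qed
qed

lemma F1': "length cs = n - 2 \<Longrightarrow> a \<in> apow k \<Longrightarrow> br (c # a # cs) \<in> apow k"
proof -
  assume cs: "length cs = n - 2" and a: "a \<in> apow k"
  have "br (a # c # cs) \<in> apow k" using F1[of "c # cs" a k] cs a n2 by simp
  then show ?thesis using skew01[OF cs, of c a] apow_sub subspace_neg by metis
qed

lemma F2: "length cs = n - 2 \<Longrightarrow> a \<in> apow 1 \<Longrightarrow> b \<in> apow m \<Longrightarrow> br (a # b # cs) \<in> apow (Suc m)"
proof -
  assume cs: "length cs = n - 2" and a: "a \<in> apow 1" and b: "b \<in> apow m"
  have cs1: "length (b # cs) = n - 1" using cs n2 by simp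
  show ?thesis
  proof (rule lin_span[OF br_lin0[OF cs1] apow_sub])
    show "a \<in> span {mul a b | a b. b \<in> apow 0}" using a by simp
  next
    fix x assume "x \<in> {mul a b | a b. b \<in> apow 0}"
    then obtain y z where x: "x = mul y z" by blast
    have "br (x # b # cs) = mul y (br (z # b # cs)) + mul z (br (y # b # cs))"
      using leib cs1 x by simp
    moreover have "mul y (br (z # b # cs)) \<in> apow (Suc m)"
      using F1'[OF cs b] apow_gen by blast
    moreover have "mul z (br (y # b # cs)) \<in> apow (Suc m)"
      using F1'[OF cs b] apow_gen by blast
    ultimately show "br (x # b # cs) \<in> apow (Suc m)"
      using apow_sub subspace_add by metis
  qed
qed

abbreviation "pd \<equiv> poisson_derived scale mul br n"
abbreviation "ld \<equiv> lie_derived scale br n"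

lemma ld_sub: "subspace (ld k)" by (cases k) auto
lemma pd_sub: "subspace (pd k)" by (cases k) auto

lemma sums_sub:
  assumes "subspace S" "subspace T" shows "subspace {x + y | x y. x \<in> S \<and> y \<in> T}"
  unfolding subspace_def
proof (intro conjI ballI allI)
  show "0 \<in> {x + y | x y. x \<in> S \<and> y \<in> T}"
    using assms subspace_0 by force
next
  fix u v assume "u \<in> {x + y | x y. x \<in> S \<and> y \<in> T}" "v \<in> {x + y | x y. x \<in> S \<and> y \<in> T}"
  then obtain a b c d where "u = a + b" "v = c + d" "a \<in> S" "b \<in> T" "c \<in> S" "d \<in> T" by blast
  moreover have "a + b + (c + d) = (a + c) + (b + d)" by (simp add: algebra_simps)
  ultimately show "u + v \<in> {x + y | x y. x \<in> S \<and> y \<in> T}"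
    using assms subspace_add by blast
next
  fix r u assume "u \<in> {x + y | x y. x \<in> S \<and> y \<in> T}"
  then obtain a b where "u = a + b" "a \<in> S" "b \<in> T" by blast
  then show "scale r u \<in> {x + y | x y. x \<in> S \<and> y \<in> T}"
    using assms subspace_scale scale_right_distrib by blast
qed

lemma phase1: "pd k \<subseteq> {x + y | x y. x \<in> ld k \<and> y \<in> apow 1}"
proof (induction k)
  case 0
  show ?case
  proof
    fix x :: 'v
    have "x = x + 0" by simp
    then show "x \<in> {x + y | x y. x \<in> ld 0 \<and> y \<in> apow 1}"
      using subspace_0[OF apow_sub[of 1]] by fastforce
  qed
next
  case (Suc k)
  let ?T = "{x + y | x y. x \<in> ld (Suc k) \<and> y \<in> apow 1}"
  have T: "subspace ?T" by (rule sums_sub[OF ld_sub apow_sub])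
  have br: "br (a # b # cs) \<in> ?T" if a: "a \<in> pd k" and b: "b \<in> pd k" and cs: "length cs = n - 2"
    for a b cs
  proof -
    obtain l u where lu: "a = l + u" "l \<in> ld k" "u \<in> apow 1" using a Suc by blast
    obtain l' u' where lu': "b = l' + u'" "l' \<in> ld k" "u' \<in> apow 1" using b Suc by blast
    have cs1: "length (b # cs) = n - 1" using cs n2 by simp
    have "br (a # b # cs) = br (l # b # cs) + br (u # b # cs)"
      using lin_add[OF br_lin0[OF cs1]] lu by simp
    also have "br (l # b # cs) = br (l # l' # cs) + br (l # u' # cs)"
      using lin_add[OF br_lin1[OF cs]] lu' by simp
    finally have eq: "br (a # b # cs) = br (l # l' # cs) + (br (l # u' # cs) + br (u # b # cs))"
      by (simp add: add.assoc)
    have "br (l # l' # cs) \<in> ld (Suc k)" using lu lu' cs by (auto intro!: span_base)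
    moreover have "br (l # u' # cs) + br (u # b # cs) \<in> apow 1"
      using F1'[OF cs lu'(3)] F1[OF cs1 lu(3)] apow_sub subspace_add by metis
    ultimately show ?thesis using eq by blast
  qed
  have pr: "mul a b \<in> ?T" for a b
  proof -
    have "mul a b = 0 + mul a b" by simp
    moreover have "mul a b \<in> apow 1" using apow_gen[of b 0 a] by simp
    ultimately show ?thesis using subspace_0[OF ld_sub[of "Suc k"]] by blast
  qed
  show ?case
    by (simp only: poisson_derived.simps) (rule span_minimal[OF _ T], use br pr in blast)
qed

lemma phase2: "pd s \<subseteq> apow 1 \<Longrightarrow> pd (s + j) \<subseteq> apow (Suc j)"
proof (induction j)
  case 0 then show ?case by simp
next
  case (Suc j)
  have IH: "pd (s + j) \<subseteq> apow (Suc j)" using Suc by blast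
  have A1: "apow (Suc j) \<subseteq> apow 1" by (rule apow_anti) simp
  have "{br (a # b # cs) | a b cs. a \<in> pd (s + j) \<and> b \<in> pd (s + j) \<and> length cs = n - 2}
      \<union> {mul a b | a b. a \<in> pd (s + j) \<and> b \<in> pd (s + j)} \<subseteq> apow (Suc (Suc j))"
    using F2 IH A1 apow_gen by blast
  then show ?case
    by (simp only: add_Suc_right poisson_derived.simps) (rule span_minimal, simp_all add: apow_sub)
qed

lemma ld_pd: "ld k \<subseteq> pd k"
proof (induction k)
  case 0 then show ?case by simp
next
  case (Suc k)
  then show ?case
    by (simp only: poisson_derived.simps lie_derived.simps) (rule span_mono, blast)
qed

lemma Q_pd: "length xs = 2 ^ k \<Longrightarrow> lprod mul xs \<in> pd k"
proof (induction k arbitrary: xs)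
  case 0 then show ?case by simp
next
  case (Suc k)
  let ?a = "take (2 ^ k) xs" and ?b = "drop (2 ^ k) xs"
  have la: "length ?a = 2 ^ k" "length ?b = 2 ^ k" using Suc.prems by auto
  have ne: "?a \<noteq> []" "?b \<noteq> []" using la by (auto simp del: length_drop length_take)
  have "lprod mul xs = mul (lprod mul ?a) (lprod mul ?b)"
    using lprod_append[of mul, OF assoc ne] by simp
  moreover have "lprod mul ?a \<in> pd k" "lprod mul ?b \<in> pd k" using Suc.IH la by auto
  ultimately show ?case by (auto intro!: span_base)
qed

lemma main: "poisson_solvable scale mul br n \<longleftrightarrow> lie_solvable scale br n \<and> assoc_nilpotent mul"
proof
  assume "poisson_solvable scale mul br n"
  then obtain s where s: "pd s = {0}" unfolding poisson_solvable_def by blast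
  have "ld s = {0}" using ld_pd[of s] s subspace_0[OF ld_sub[of s]] by blast
  moreover have "assoc_nilpotent mul"
    unfolding assoc_nilpotent_def
  proof (intro exI[of _ "2 ^ s"] conjI allI impI)
    show "1 \<le> (2::nat) ^ s" by simp
  next
    fix xs :: "'v list" assume "length xs = 2 ^ s"
    then show "foldl mul (hd xs) (tl xs) = 0" using Q_pd[of xs s] s by (simp add: lprod_def)
  qed
  ultimately show "lie_solvable scale br n \<and> assoc_nilpotent mul"
    unfolding lie_solvable_def by blast
next
  assume "lie_solvable scale br n \<and> assoc_nilpotent mul"
  then obtain s m where s: "ld s = {0}" and m: "m \<ge> 1"
    and nil: "\<And>xs. length xs = m \<Longrightarrow> foldl mul (hd xs) (tl xs) = 0"
    unfolding lie_solvable_def assoc_nilpotent_def by blast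
  have "pd s \<subseteq> apow 1" using phase1[of s] s by auto
  then have p: "pd (s + m) \<subseteq> apow (Suc m)" by (rule phase2)
  have "{lprod mul xs | xs. length xs = Suc (m - 1)} \<subseteq> {0}"
    using nil m by (auto simp: lprod_def)
  then have "span {lprod mul xs | xs. length xs = Suc (m - 1)} \<subseteq> {0}"
    by (intro span_minimal) auto
  then have "apow (m - 1) \<subseteq> {0}" using apow_Q[of "m - 1"] by blast
  moreover have "apow (Suc m) \<subseteq> apow (m - 1)" by (rule apow_anti) simp
  ultimately have "pd (s + m) = {0}" using p subspace_0[OF pd_sub] by blast
  then show "poisson_solvable scale mul br n" unfolding poisson_solvable_def by blast
qed

end

theorem corollary5p10:
  fixes scale :: "'k::field_char_0 \<Rightarrow> 'v::ab_group_add \<Rightarrow> 'v"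
    and mul :: "'v \<Rightarrow> 'v \<Rightarrow> 'v"
    and br :: "'v list \<Rightarrow> 'v"
    and n :: nat
  assumes "alg_closed TYPE('k)"
    and "n \<ge> 2"
    and "poisson_nLie scale mul br n"
    and "\<exists>B. finite B \<and> module.span scale B = UNIV"
  shows "poisson_solvable scale mul br n \<longleftrightarrow>
           lie_solvable scale br n \<and> assoc_nilpotent mul"
proof -
  have "vector_space scale" using assms(3) unfolding poisson_nLie_def by blast
  then interpret pn scale mul br n
    using assms(2,3) by (simp add: pn_def pn_axioms_def)
  show ?thesis by (rule main)
qed

end
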